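(* Let $\omega\in\mathbb{R}^n$ and let $i\ge 0$ be an index such that $T_{i+1}(\omega)$ is defined. Then $$\frac{1}{T_i(\omega)+T_{i+1}(\omega)}\le\|T_i(\omega)\omega\|_{\mathbb{Z}}\le\frac{1}{T_{i+1}(\omega)^{1/n}}.$$
   Context: For $\omega=(\omega_1,\dots,\omega_n)\in\mathbb{R}^n$, $|\omega|=\max_i|\omega_i|$ and $\|\omega\|_{\mathbb{Z}}=\min_{k\in\mathbb{Z}^n}|\omega-k|$. The periods of $\omega$ are defined by $T_0(\omega)=1$ and $T_{i+1}(\omega)=\min\{T\in\mathbb{N},\,T\ge 1:\|T\omega\|_{\mathbb{Z}}<\|T_i(\omega)\omega\|_{\mathbb{Z}}\}$ (defined whenever this set is nonempty). *)

theory Defs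
  imports "HOL-Analysis.Analysis"
begin

definition supnorm :: "real ^ 'n \<Rightarrow> real" where
  "supnorm x = Max (range (\<lambda>i. \<bar>x $ i\<bar>))"

definition normZ :: "real ^ 'n \<Rightarrow> real" where
  "normZ w = (INF k \<in> {k :: real ^ 'n. \<forall>i. k $ i \<in> \<int>}. supnorm (w - k))"

fun period :: "real ^ 'n \<Rightarrow> nat \<Rightarrow> nat option" where
  "period w 0 = Some 1"
| "period w (Suc i) =
     (case period w i of
        None \<Rightarrow> None
      | Some t \<Rightarrow>
          (if \<exists>T::nat. T \<ge> 1 \<and> normZ (real T *\<^sub>R w) < normZ (real t *\<^sub>R w)
           then Some (LEAST T::nat. T \<ge> 1 \<and> normZ (real T *\<^sub>R w) < normZ (real t *\<^sub>R w))
           else None))"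

end

theory Submission
  imports Defs
begin

lemma supnorm_ge: "\<bar>x $ i\<bar> \<le> supnorm x"
  unfolding supnorm_def by (rule Max_ge) auto

lemma supnorm_attained: "\<exists>j. supnorm x = \<bar>x $ j\<bar>"
proof -
  have "Max (range (\<lambda>i. \<bar>x $ i\<bar>)) \<in> range (\<lambda>i. \<bar>x $ i\<bar>)"
    by (rule Max_in) auto
  then obtain j where "Max (range (\<lambda>i. \<bar>x $ i\<bar>)) = \<bar>x $ j\<bar>" by blast
  then show ?thesis unfolding supnorm_def by blast
qed

lemma supnorm_lt: assumes "\<And>i. \<bar>x $ i\<bar> < c" shows "supnorm x < c"
proof -
  obtain j where "supnorm x = \<bar>x $ j\<bar>" using supnorm_attained by blast
  then show ?thesis using assms[of j] by simp
qed

lemma supnorm_le: assumes "\<And>i. \<bar>x $ i\<bar> \<le> c" shows "supnorm x \<le> c"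
proof -
  obtain j where "supnorm x = \<bar>x $ j\<bar>" using supnorm_attained by blast
  then show ?thesis using assms[of j] by simp
qed

definition rnd :: "real ^ 'n \<Rightarrow> real ^ 'n" where
  "rnd v = (\<chi> i. of_int (round (v $ i)))"

lemma round_nearest: "\<bar>(a::real) - of_int (round a)\<bar> \<le> \<bar>a - of_int (m::int)\<bar>"
proof -
  have h1: "of_int (round a) \<le> a + 1/2" "a - 1/2 < of_int (round a)"
    using of_int_round_le of_int_round_gt by auto
  consider "m \<le> round a - 1" | "m = round a" | "m \<ge> round a + 1" by linarith
  then show ?thesis
  proof cases
    case 1 then have "real_of_int m \<le> of_int (round a) - 1" by linarith
    then show ?thesis using h1 by linarith
  next
    case 2 then show ?thesis by simp
  next
    case 3 then have "real_of_int m \<ge> of_int (round a) + 1" by linarith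
    then show ?thesis using h1 by linarith
  qed
qed

lemma normZ_rnd: "normZ v = supnorm (v - rnd v)"
  unfolding normZ_def
proof (rule cInf_eq_minimum)
  show "supnorm (v - rnd v) \<in> (\<lambda>k. supnorm (v - k)) ` {k. \<forall>i. k $ i \<in> \<int>}"
    by (rule imageI) (auto simp: rnd_def)
next
  fix x assume "x \<in> (\<lambda>k. supnorm (v - k)) ` {k. \<forall>i. k $ i \<in> \<int>}"
  then obtain k where k: "\<forall>i. k $ i \<in> \<int>" and x: "x = supnorm (v - k)" by auto
  show "supnorm (v - rnd v) \<le> x" unfolding x
  proof (rule supnorm_le)
    fix i
    obtain m where m: "k $ i = of_int m" using k by (metis Ints_cases)
    have "\<bar>(v - rnd v) $ i\<bar> \<le> \<bar>v $ i - k $ i\<bar>"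
      using round_nearest[of "v $ i" m] m by (simp add: rnd_def)
    also have "\<dots> \<le> supnorm (v - k)" using supnorm_ge[of "v - k" i] by simp
    finally show "\<bar>(v - rnd v) $ i\<bar> \<le> supnorm (v - k)" .
  qed
qed

lemma normZ_le: assumes "\<And>i. \<bar>v $ i - of_int (m i)\<bar> < c" shows "normZ v < c"
proof -
  have "normZ v \<le> supnorm (v - (\<chi> i. of_int (m i)))"
    unfolding normZ_rnd
  proof (rule supnorm_le)
    fix i
    have "\<bar>(v - rnd v) $ i\<bar> \<le> \<bar>v $ i - of_int (m i)\<bar>"
      using round_nearest[of "v $ i" "m i"] by (simp add: rnd_def)
    also have "\<dots> \<le> supnorm (v - (\<chi> i. of_int (m i)))"
      using supnorm_ge[of "v - (\<chi> i. of_int (m i))" i] by simp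
    finally show "\<bar>(v - rnd v) $ i\<bar> \<le> supnorm (v - (\<chi> i. of_int (m i)))" .
  qed
  also have "\<dots> < c" by (rule supnorm_lt) (simp add: assms)
  finally show ?thesis .
qed

lemma normZ_nonneg: "normZ v \<ge> 0"
  proof -
  have "0 \<le> \<bar>(v - rnd v) $ i\<bar>" for i by simp
  then show ?thesis unfolding normZ_rnd using supnorm_ge[of "v - rnd v"] order_trans by blast
qed

lemma normZ_half: "normZ v \<le> 1/2"
  unfolding normZ_rnd
proof (rule supnorm_le)
  fix i show "\<bar>(v - rnd v) $ i\<bar> \<le> 1/2"
    using of_int_round_abs_le[of "v $ i"] by (simp add: rnd_def abs_minus_commute)
qed

lemma period_suc:
  assumes "period w i = Some s" "period w (Suc i) = Some t"
  shows "(\<exists>T::nat. T \<ge> 1 \<and> normZ (real T *\<^sub>R w) < normZ (real s *\<^sub>R w))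
    \<and> t = (LEAST T::nat. T \<ge> 1 \<and> normZ (real T *\<^sub>R w) < normZ (real s *\<^sub>R w))"
proof -
  let ?P = "\<lambda>T::nat. T \<ge> 1 \<and> normZ (real T *\<^sub>R w) < normZ (real s *\<^sub>R w)"
  have e: "period w (Suc i) = (if \<exists>T. ?P T then Some (LEAST T. ?P T) else None)"
    using assms(1) by simp
  show ?thesis
  proof (cases "\<exists>T. ?P T")
    case True
    have "period w (Suc i) = Some (LEAST T. ?P T)" using e True by (simp del: period.simps)
    then show ?thesis using True assms(2) by (simp del: period.simps)
  next
    case False
    have "period w (Suc i) = None" using e False by (simp del: period.simps)
    then show ?thesis using assms(2) by (simp del: period.simps)
  qed
qed

lemma period_step:
  assumes "period w i = Some t" "period w (Suc i) = Some t'"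
  shows "t' \<ge> 1" "normZ (real t' *\<^sub>R w) < normZ (real t *\<^sub>R w)"
    "\<And>T. 1 \<le> T \<Longrightarrow> T < t' \<Longrightarrow> normZ (real t *\<^sub>R w) \<le> normZ (real T *\<^sub>R w)"
proof -
  let ?P = "\<lambda>T::nat. T \<ge> 1 \<and> normZ (real T *\<^sub>R w) < normZ (real t *\<^sub>R w)"
  have ex: "\<exists>T. ?P T" and t: "t' = (LEAST T. ?P T)"
    using period_suc[OF assms] by blast+
  have Pt: "?P t'" unfolding t by (rule LeastI_ex[OF ex])
  then show "t' \<ge> 1" "normZ (real t' *\<^sub>R w) < normZ (real t *\<^sub>R w)" by auto
  fix T :: nat assume "1 \<le> T" "T < t'"
  have "\<not> ?P T" using \<open>T < t'\<close> unfolding t by (rule not_less_Least)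
  then show "normZ (real t *\<^sub>R w) \<le> normZ (real T *\<^sub>R w)" using \<open>1 \<le> T\<close> by linarith
qed

lemma period_inv:
  "period w i = Some t \<Longrightarrow> t \<ge> 1 \<and> (\<forall>T. 1 \<le> T \<longrightarrow> T < t \<longrightarrow> normZ (real t *\<^sub>R w) < normZ (real T *\<^sub>R w))"
proof (induction i arbitrary: t)
  case 0 then show ?case by simp
next
  case (Suc i)
  obtain s where s: "period w i = Some s" using Suc.prems by (cases "period w i") auto
  note st = period_step[OF s Suc.prems]
  have "\<forall>T. 1 \<le> T \<longrightarrow> T < t \<longrightarrow> normZ (real t *\<^sub>R w) < normZ (real T *\<^sub>R w)"
  proof (intro allI impI)
    fix T :: nat assume "1 \<le> T" "T < t"
    then show "normZ (real t *\<^sub>R w) < normZ (real T *\<^sub>R w)" using st(2) st(3)[of T] by linarith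
  qed
  then show ?case using st(1) by blast
qed

lemma int_abs_lt1: "\<bar>real_of_int z\<bar> < 1 \<Longrightarrow> z = 0"
proof -
  assume a: "\<bar>real_of_int z\<bar> < 1"
  have "real_of_int \<bar>z\<bar> < real_of_int 1" using a by simp
  then have "\<bar>z\<bar> < 1" by (simp only: of_int_less_iff)
  then show "z = 0" by simp
qed

lemma lower_bound:
  fixes w :: "real ^ 'n" and t t' :: nat
  assumes t1: "1 \<le> t" and tt: "t \<le> t'" and lt: "normZ (real t' *\<^sub>R w) < normZ (real t *\<^sub>R w)"
  shows "1 / (real t + real t') \<le> normZ (real t *\<^sub>R w)"
proof (rule ccontr)
  define \<delta> where "\<delta> = normZ (real t *\<^sub>R w)"
  assume "\<not> ?thesis"
  then have small: "\<delta> * (real t + real t') < 1" using t1 unfolding \<delta>_def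
    by (simp add: field_simps)
  define x where "x = real t *\<^sub>R w - rnd (real t *\<^sub>R w)"
  define y where "y = real t' *\<^sub>R w - rnd (real t' *\<^sub>R w)"
  obtain j where j: "\<delta> = \<bar>x $ j\<bar>" using supnorm_attained[of x] unfolding \<delta>_def x_def normZ_rnd by blast
  have yj: "\<bar>y $ j\<bar> < \<delta>" using supnorm_ge[of y j] lt unfolding \<delta>_def y_def normZ_rnd by linarith
  define d where "d = real t * y $ j - real t' * x $ j"
  have d_int: "d = of_int (int t' * round (real t * w $ j) - int t * round (real t' * w $ j))"
    unfolding d_def x_def y_def rnd_def by (simp add: algebra_simps)
  have "\<bar>d\<bar> \<le> real t * \<bar>y $ j\<bar> + real t' * \<bar>x $ j\<bar>"
    unfolding d_def using abs_triangle_ineq4[of "real t * y $ j" "real t' * x $ j"]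
    by (simp add: abs_mult)
  also have "\<dots> \<le> real t * \<delta> + real t' * \<delta>" using yj j t1 by (simp add: mult_left_mono)
  also have "\<dots> < 1" using small by (simp add: algebra_simps)
  finally have "\<bar>d\<bar> < 1" .
  then have "d = 0" unfolding d_int using int_abs_lt1 by fastforce
  then have "real t * y $ j = real t' * x $ j" unfolding d_def by simp
  then have "real t * \<bar>y $ j\<bar> = real t' * \<delta>" using j
    by (metis abs_mult abs_of_nat)
  moreover have "real t' * \<delta> \<ge> real t * \<delta>" using tt j by (simp add: mult_right_mono)
  moreover have "real t * \<bar>y $ j\<bar> < real t * \<delta>" using yj t1 by simp
  ultimately show False by linarith
qed

lemma mod_inj_interval:
  assumes "k \<le> N" "0 < N"
  shows "inj_on (\<lambda>g::int. g mod N) {c..<c + k}"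
proof (rule inj_onI)
  fix g1 g2 assume g1: "g1 \<in> {c..<c + k}" and g2: "g2 \<in> {c..<c + k}" and e: "g1 mod N = g2 mod N"
  then have "N dvd (g1 - g2)" by (simp add: mod_eq_dvd_iff)
  then obtain q where q: "g1 - g2 = N * q" by blast
  have "\<bar>g1 - g2\<bar> < N" using g1 g2 assms by auto
  then have "\<bar>N * q\<bar> < N * 1" using q by simp
  then have "\<bar>q\<bar> < 1" using assms by (simp add: abs_mult)
  then have "q = 0" by simp
  then show "g1 = g2" using q by simp
qed

lemma count_bound:
  fixes w :: "real ^ 'n" and \<delta> :: real and M N :: nat
  assumes dpos: "0 < \<delta>" and d1: "\<delta> \<le> 1" and N: "N \<ge> 1"
    and hyp: "\<forall>T::nat. 1 \<le> T \<longrightarrow> T < M \<longrightarrow> (\<forall>m::'n \<Rightarrow> int. \<exists>i. \<delta> \<le> \<bar>real T * w $ i - of_int (m i)\<bar>)"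
  shows "M * (nat \<lfloor>real N * \<delta>\<rfloor>) ^ CARD('n) \<le> N ^ CARD('n)"
proof -
  define k where "k = nat \<lfloor>real N * \<delta>\<rfloor>"
  have kN: "int k \<le> int N"
  proof -
    have "real N * \<delta> \<le> real N" using d1 by (simp add: mult_left_le)
    then have "\<lfloor>real N * \<delta>\<rfloor> \<le> int N" by (simp add: floor_le_iff)
    then show ?thesis unfolding k_def by simp
  qed
  have kle: "real k \<le> real N * \<delta>" unfolding k_def using dpos N by simp
  define f where "f a i = real a * w $ i - of_int \<lfloor>real a * w $ i\<rfloor>" for a :: nat and i :: 'n
  define c where "c a i = \<lceil>real N * f a i\<rceil>" for a :: nat and i :: 'n
  define S where "S a = PiE UNIV (\<lambda>i. (\<lambda>g. g mod int N) ` {c a i ..< c a i + int k})" for a :: nat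
  define B where "B = PiE (UNIV :: 'n set) (\<lambda>_. {0..<int N})"
  have Npos: "(0::int) < int N" using N by simp
  have cardS: "card (S a) = k ^ CARD('n)" for a
  proof -
    have "card (S a) = (\<Prod>i\<in>UNIV. card ((\<lambda>g. g mod int N) ` {c a i ..< c a i + int k}))"
      unfolding S_def by (rule card_PiE) simp
    also have "\<dots> = (\<Prod>i\<in>(UNIV::'n set). k)"
    proof (rule prod.cong)
      fix i show "card ((\<lambda>g. g mod int N) ` {c a i ..< c a i + int k}) = k"
        using card_image[OF mod_inj_interval[OF kN Npos, of "c a i"]] by simp
    qed simp
    also have "\<dots> = k ^ CARD('n)" by simp
    finally show ?thesis .
  qed
  have subB: "S a \<subseteq> B" for a
  proof
    fix x assume "x \<in> S a"
    then have "\<forall>i. x i \<in> (\<lambda>g. g mod int N) ` {c a i ..< c a i + int k}"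
      unfolding S_def by (auto simp: PiE_iff)
    then have "\<forall>i. x i \<in> {0..<int N}"
    proof (intro allI)
      fix i assume "\<forall>i. x i \<in> (\<lambda>g. g mod int N) ` {c a i ..< c a i + int k}"
      then obtain g where "x i = g mod int N" by blast
      then show "x i \<in> {0..<int N}" using Npos by simp
    qed
    then show "x \<in> B" using \<open>x \<in> S a\<close> unfolding B_def S_def by (auto simp: PiE_iff)
  qed
  have finB: "finite B" unfolding B_def by (rule finite_PiE) auto
  have cardB: "card B = N ^ CARD('n)" unfolding B_def by (simp add: card_PiE)
  have interval: "real N * f a i \<le> of_int g \<and> of_int g < real N * f a i + real N * \<delta>"
    if "g \<in> {c a i ..< c a i + int k}" for a i g
  proof -
    have c1: "real N * f a i \<le> of_int (c a i)" unfolding c_def by (rule le_of_int_ceiling)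
    have c2: "of_int (c a i) < real N * f a i + 1" 
      using ceiling_correct[of "real N * f a i"] unfolding c_def by linarith
    have "g \<ge> c a i" "g \<le> c a i + int k - 1" using that by auto
    then have "real_of_int g \<ge> of_int (c a i)" "real_of_int g \<le> of_int (c a i) + real k - 1"
      by (simp_all add: of_int_le_iff[symmetric])
    then show ?thesis using c1 c2 kle by linarith
  qed
  have disj: "S a \<inter> S b = {}" if ab: "a < M" "b < M" "a \<noteq> b" for a b
  proof (rule ccontr)
    assume "S a \<inter> S b \<noteq> {}"
    then obtain h where ha: "h \<in> S a" and hb: "h \<in> S b" by blast
    have "\<forall>i. \<exists>r::int. \<bar>(real a - real b) * w $ i - of_int r\<bar> < \<delta>"
    proof
      fix i
      obtain g where g: "g \<in> {c a i ..< c a i + int k}" "h i = g mod int N"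
      proof -
        have "h i \<in> (\<lambda>g. g mod int N) ` {c a i ..< c a i + int k}"
          using ha unfolding S_def by (auto simp: PiE_iff)
        then show ?thesis using that by blast
      qed
      obtain g' where g': "g' \<in> {c b i ..< c b i + int k}" "h i = g' mod int N"
      proof -
        have "h i \<in> (\<lambda>g. g mod int N) ` {c b i ..< c b i + int k}"
          using hb unfolding S_def by (auto simp: PiE_iff)
        then show ?thesis using that by blast
      qed
      have "g mod int N = g' mod int N" using g(2) g'(2) by simp
      then have "int N dvd (g - g')" by (simp only: mod_eq_dvd_iff)
      then obtain q where q: "g - g' = int N * q" by blast
      have q': "real_of_int g - of_int g' = real N * of_int q"
        using arg_cong[OF q, of real_of_int] by simp
      note ia = interval[OF g(1)] and ib = interval[OF g'(1)]
      have eq: "real N * (f a i - f b i - of_int q) = (real N * f a i - of_int g) - (real N * f b i - of_int g')"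
        using q' by (simp add: algebra_simps)
      have "\<bar>real N * (f a i - f b i - of_int q)\<bar> < real N * \<delta>"
        unfolding eq using ia ib by (simp add: abs_less_iff) 
      then have "real N * \<bar>f a i - f b i - of_int q\<bar> < real N * \<delta>" by (simp add: abs_mult)
      then have lt: "\<bar>f a i - f b i - of_int q\<bar> < \<delta>" using N by (simp add: mult_less_cancel_left_pos)
      have "f a i - f b i - of_int q = (real a - real b) * w $ i - of_int (\<lfloor>real a * w $ i\<rfloor> - \<lfloor>real b * w $ i\<rfloor> + q)"
        unfolding f_def by (simp add: algebra_simps)
      then show "\<exists>r::int. \<bar>(real a - real b) * w $ i - of_int r\<bar> < \<delta>" using lt by metis
    qed
    then obtain r where r: "\<And>i. \<bar>(real a - real b) * w $ i - of_int (r i)\<bar> < \<delta>" by metis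
    show False
    proof (cases "b < a")
      case True
      define T where "T = a - b"
      have T: "1 \<le> T" "T < M" "real T = real a - real b" using True ab unfolding T_def by auto
      obtain i where "\<delta> \<le> \<bar>real T * w $ i - of_int (r i)\<bar>" using hyp T by blast
      then show False using r[of i] T(3) by simp
    next
      case False
      then have ba: "a < b" using ab by simp
      define T where "T = b - a"
      have T: "1 \<le> T" "T < M" "real T = real b - real a" using ba ab unfolding T_def by auto
      have "\<forall>m::'n \<Rightarrow> int. \<exists>i. \<delta> \<le> \<bar>real T * w $ i - of_int (m i)\<bar>" using hyp T(1,2) by blast
      then have "\<exists>i. \<delta> \<le> \<bar>real T * w $ i - of_int ((\<lambda>i. - r i) i)\<bar>" by (rule spec)
      then obtain i where i: "\<delta> \<le> \<bar>real T * w $ i - of_int (- r i)\<bar>" by auto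
      have "real T * w $ i - of_int (- r i) = - ((real a - real b) * w $ i - of_int (r i))"
        using T(3) by (simp add: algebra_simps flip: distrib_right)
      then have "\<bar>real T * w $ i - of_int (- r i)\<bar> = \<bar>(real a - real b) * w $ i - of_int (r i)\<bar>"
        by (simp only: abs_minus_cancel)
      then show False using r[of i] i by simp
    qed
  qed
  have "card (\<Union>a\<in>{..<M}. S a) = (\<Sum>a\<in>{..<M}. card (S a))"
    by (rule card_UN_disjoint) (auto intro: finite_subset[OF subB finB] dest: disj)
  also have "\<dots> = M * k ^ CARD('n)" by (simp add: cardS)
  finally have e: "card (\<Union>a\<in>{..<M}. S a) = M * k ^ CARD('n)" .
  have "card (\<Union>a\<in>{..<M}. S a) \<le> card B" by (rule card_mono[OF finB]) (use subB in blast)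
  then show ?thesis using e cardB unfolding k_def by simp
qed

lemma vol_bound:
  fixes w :: "real ^ 'n" and \<delta> :: real and M :: nat
  assumes dpos: "0 < \<delta>" and d1: "\<delta> \<le> 1"
    and hyp: "\<forall>T::nat. 1 \<le> T \<longrightarrow> T < M \<longrightarrow> (\<forall>m::'n \<Rightarrow> int. \<exists>i. \<delta> \<le> \<bar>real T * w $ i - of_int (m i)\<bar>)"
  shows "real M * \<delta> ^ CARD('n) \<le> 1"
proof -
  have key: "real M * (\<delta> - 1 / real N) ^ CARD('n) \<le> 1" if N: "1 \<le> real N * \<delta>" "N \<ge> 1" for N :: nat
  proof -
    define k where "k = nat \<lfloor>real N * \<delta>\<rfloor>"
    have cb: "real (M * k ^ CARD('n)) \<le> real (N ^ CARD('n))"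
      using count_bound[OF dpos d1 N(2) hyp] unfolding k_def by (simp only: of_nat_le_iff)
    have kge: "real N * \<delta> - 1 \<le> real k" unfolding k_def
      using floor_correct[of "real N * \<delta>"] N(1) by simp
    have nn: "0 \<le> real N * \<delta> - 1" using N(1) by simp
    have "(real N * \<delta> - 1) ^ CARD('n) \<le> real k ^ CARD('n)" by (rule power_mono[OF kge nn])
    moreover have "real N * \<delta> - 1 = real N * (\<delta> - 1 / real N)" using N(2) by (simp add: field_simps)
    ultimately have "real N ^ CARD('n) * (\<delta> - 1 / real N) ^ CARD('n) \<le> real k ^ CARD('n)"
      by (simp add: power_mult_distrib)
    then have "real M * (real N ^ CARD('n) * (\<delta> - 1 / real N) ^ CARD('n)) \<le> real M * real k ^ CARD('n)"
      by (simp add: mult_left_mono)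
    also have "\<dots> \<le> real N ^ CARD('n)" using cb by simp
    finally have "real N ^ CARD('n) * (real M * (\<delta> - 1 / real N) ^ CARD('n)) \<le> real N ^ CARD('n) * 1"
      by (simp add: algebra_simps)
    moreover have "0 < real N ^ CARD('n)" using N(2) by simp
    ultimately show ?thesis by (simp only: mult_le_cancel_left_pos)
  qed
  have lim: "(\<lambda>N. real M * (\<delta> - 1 / real N) ^ CARD('n)) \<longlonglongrightarrow> real M * (\<delta> - 0) ^ CARD('n)"
    by (intro tendsto_intros)
  show ?thesis
  proof (rule LIMSEQ_le_const2[OF lim[simplified]])
    show "\<exists>N0. \<forall>N\<ge>N0. real M * (\<delta> - 1 / real N) ^ CARD('n) \<le> 1"
    proof (intro exI allI impI)
      fix N assume a: "nat \<lceil>1 / \<delta>\<rceil> + 1 \<le> N"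
      have "1 / \<delta> \<le> real N" using a real_nat_ceiling_ge[of "1/\<delta>"] by linarith
      then have "1 \<le> real N * \<delta>" using dpos by (simp add: field_simps)
      then show "real M * (\<delta> - 1 / real N) ^ CARD('n) \<le> 1" using key a by simp
    qed
  qed
qed

lemma upper_aux:
  fixes w :: "real ^ 'n" and t t' :: nat
  assumes t1: "t' \<ge> 1" and lt: "normZ (real t' *\<^sub>R w) < normZ (real t *\<^sub>R w)"
    and mn: "\<And>T. 1 \<le> T \<Longrightarrow> T < t' \<Longrightarrow> normZ (real t *\<^sub>R w) \<le> normZ (real T *\<^sub>R w)"
  shows "real t' * normZ (real t *\<^sub>R w) ^ CARD('n) \<le> 1"
proof -
  define \<delta> where "\<delta> = normZ (real t *\<^sub>R w)"
  have dpos: "0 < \<delta>" using lt normZ_nonneg[of "real t' *\<^sub>R w"] unfolding \<delta>_def by linarith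
  have d1: "\<delta> \<le> 1" using normZ_half[of "real t *\<^sub>R w"] unfolding \<delta>_def by simp
  have hyp: "\<forall>T::nat. 1 \<le> T \<longrightarrow> T < t' \<longrightarrow> (\<forall>m::'n \<Rightarrow> int. \<exists>i. \<delta> \<le> \<bar>real T * w $ i - of_int (m i)\<bar>)"
  proof (intro allI impI)
    fix T :: nat and m :: "'n \<Rightarrow> int" assume T: "1 \<le> T" "T < t'"
    show "\<exists>i. \<delta> \<le> \<bar>real T * w $ i - of_int (m i)\<bar>"
    proof (rule ccontr)
      assume "\<not> ?thesis"
      then have "\<And>i. \<bar>(real T *\<^sub>R w) $ i - of_int (m i)\<bar> < \<delta>" by (simp add: not_le)
      then have "normZ (real T *\<^sub>R w) < \<delta>" by (rule normZ_le)
      then show False using mn[OF T] unfolding \<delta>_def by simp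
    qed
  qed
  show ?thesis using vol_bound[OF dpos d1 hyp] unfolding \<delta>_def .
qed

lemma root_bound:
  fixes d x :: real and n :: nat
  assumes "0 < d" "0 < x" "n \<ge> 1" "x * d ^ n \<le> 1"
  shows "d \<le> 1 / (x powr (1 / real n))"
proof -
  have "d ^ n \<le> 1 / x" using assms by (simp add: field_simps)
  then have "(d ^ n) powr (1 / real n) \<le> (1 / x) powr (1 / real n)"
    using assms by (intro powr_mono2) auto
  moreover have "(d ^ n) powr (1 / real n) = d"
    using assms by (simp add: powr_realpow[symmetric] powr_powr)
  moreover have "(1 / x) powr (1 / real n) = 1 / (x powr (1 / real n))"
    using assms by (simp add: powr_divide)
  ultimately show ?thesis by simp
qed

theorem mainTheorem2:
  fixes w :: "real ^ 'n" and i t t' :: nat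
  assumes "period w i = Some t"
    and "period w (Suc i) = Some t'"
  shows "1 / (real t + real t') \<le> normZ (real t *\<^sub>R w)
       \<and> normZ (real t *\<^sub>R w) \<le> 1 / (real t' powr (1 / real CARD('n)))"
proof
  note st = period_step[OF assms]
  have inv: "t \<ge> 1" "\<forall>T. 1 \<le> T \<longrightarrow> T < t \<longrightarrow> normZ (real t *\<^sub>R w) < normZ (real T *\<^sub>R w)"
    using period_inv[OF assms(1)] by auto
  have tt: "t \<le> t'"
  proof (rule ccontr)
    assume "\<not> t \<le> t'"
    then have "normZ (real t *\<^sub>R w) < normZ (real t' *\<^sub>R w)" using inv st(1) by auto
    then show False using st(2) by simp
  qed
  show "1 / (real t + real t') \<le> normZ (real t *\<^sub>R w)"
    by (rule lower_bound[OF inv(1) tt st(2)])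
  have dpos: "0 < normZ (real t *\<^sub>R w)" using st(2) normZ_nonneg[of "real t' *\<^sub>R w"] by linarith
  have t'pos: "0 < real t'" using st(1) by simp
  have n1: "CARD('n) \<ge> 1" by (simp add: Suc_le_eq)
  show "normZ (real t *\<^sub>R w) \<le> 1 / (real t' powr (1 / real CARD('n)))"
    by (rule root_bound[OF dpos t'pos n1 upper_aux[OF st(1) st(2) st(3)]])
qed

end
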